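(* Let $(M,g)$ be a $\mathcal{W}^{\star}$-symmetric space-time (i.e. $\nabla_m\mathcal{W}^{\star}_{ijkl}=0$) obeying Einstein's field equation for a purely electro-magnetic distribution, i.e. $R_{ij}=kT_{ij}$ with $k\neq0$ a constant and $T_{ij}$ a symmetric tensor with vanishing trace $g^{ij}T_{ij}=0$. Then the energy-momentum tensor is covariantly constant: $\nabla_m T_{jk}=0$.
   Context: A space-time is a $4$-dimensional Lorentzian manifold $(M,g)$ with Levi-Civita connection $\nabla$. $R_{ijkl}$ denotes the components of the Riemann curvature tensor, with index conventions such that the Ricci tensor is $R_{jk}=g^{il}R_{ijkl}$; $R=g^{jk}R_{jk}$ is the scalar curvature. The $\mathcal{W}^{\star}$-curvature tensor is $\mathcal{W}^{\star}_{ijkl}=R_{ijkl}-\tfrac{1}{3}\left[g_{jk}R_{il}-g_{jl}R_{ik}\right]$. *)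

theory Defs
  imports "HOL-Analysis.Analysis"
begin

text \<open>Local coordinate description of a 4-dimensional space-time: a coordinate
chart is an open set U of real^4; indices range over the 4-element type 4.
Scalar fields are functions real^4 => real.\<close>

type_synonym point = "real ^ 4"
type_synonym idx = 4

definition pd :: "idx \<Rightarrow> (point \<Rightarrow> real) \<Rightarrow> point \<Rightarrow> real" where
  "pd m f x = deriv (\<lambda>t. f (x + t *\<^sub>R axis m 1)) 0"

definition iter_pd :: "idx list \<Rightarrow> (point \<Rightarrow> real) \<Rightarrow> point \<Rightarrow> real" where
  "iter_pd ms f = foldr pd ms f"

definition smooth_on :: "point set \<Rightarrow> (point \<Rightarrow> real) \<Rightarrow> bool" where
  "smooth_on U f \<longleftrightarrow> (\<forall>ms. \<forall>x\<in>U. iter_pd ms f differentiable (at x))"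

definition metric_matrix :: "(idx \<Rightarrow> idx \<Rightarrow> point \<Rightarrow> real) \<Rightarrow> point \<Rightarrow> real^4^4" where
  "metric_matrix g x = (\<chi> i j. g i j x)"

definition minkowski :: "real^4^4" where
  "minkowski = (\<chi> i j. if i = j then (if i = 0 then -1 else 1) else 0)"

text \<open>Lorentzian metric on U: smooth symmetric components whose matrix has
signature (-,+,+,+) at each point (Sylvester normal form).\<close>
definition lorentzian_on :: "point set \<Rightarrow> (idx \<Rightarrow> idx \<Rightarrow> point \<Rightarrow> real) \<Rightarrow> bool" where
  "lorentzian_on U g \<longleftrightarrow> open U \<and>
     (\<forall>i j. smooth_on U (g i j)) \<and>
     (\<forall>i j. \<forall>x\<in>U. g i j x = g j i x) \<and>
     (\<forall>x\<in>U. \<exists>P::real^4^4. invertible P \<and>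
         transpose P ** metric_matrix g x ** P = minkowski)"

definition ginv :: "(idx \<Rightarrow> idx \<Rightarrow> point \<Rightarrow> real) \<Rightarrow> idx \<Rightarrow> idx \<Rightarrow> point \<Rightarrow> real" where
  "ginv g i j x = matrix_inv (metric_matrix g x) $ i $ j"

definition christoffel :: "(idx \<Rightarrow> idx \<Rightarrow> point \<Rightarrow> real) \<Rightarrow> idx \<Rightarrow> idx \<Rightarrow> idx \<Rightarrow> point \<Rightarrow> real" where
  "christoffel g k i j x = (1/2) * (\<Sum>l\<in>UNIV. ginv g k l x *
      (pd i (g l j) x + pd j (g l i) x - pd l (g i j) x))"

text \<open>R_{ijkl} = g(R(d_i,d_j) d_k, d_l) with R(X,Y)Z = nabla_X nabla_Y Z - nabla_Y nabla_X Z - nabla_[X,Y] Z,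
so that the Ricci tensor is R_{jk} = g^{il} R_{ijkl}.\<close>
definition riemann :: "(idx \<Rightarrow> idx \<Rightarrow> point \<Rightarrow> real) \<Rightarrow> idx \<Rightarrow> idx \<Rightarrow> idx \<Rightarrow> idx \<Rightarrow> point \<Rightarrow> real" where
  "riemann g i j k l x = (\<Sum>m\<in>UNIV. g l m x *
      (pd i (christoffel g m j k) x - pd j (christoffel g m i k) x
       + (\<Sum>p\<in>UNIV. christoffel g m i p x * christoffel g p j k x
                   - christoffel g m j p x * christoffel g p i k x)))"

definition ricci :: "(idx \<Rightarrow> idx \<Rightarrow> point \<Rightarrow> real) \<Rightarrow> idx \<Rightarrow> idx \<Rightarrow> point \<Rightarrow> real" where
  "ricci g j k x = (\<Sum>i\<in>UNIV. \<Sum>l\<in>UNIV. ginv g i l x * riemann g i j k l x)"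

definition scalar_curv :: "(idx \<Rightarrow> idx \<Rightarrow> point \<Rightarrow> real) \<Rightarrow> point \<Rightarrow> real" where
  "scalar_curv g x = (\<Sum>j\<in>UNIV. \<Sum>k\<in>UNIV. ginv g j k x * ricci g j k x)"

definition Wstar :: "(idx \<Rightarrow> idx \<Rightarrow> point \<Rightarrow> real) \<Rightarrow> idx \<Rightarrow> idx \<Rightarrow> idx \<Rightarrow> idx \<Rightarrow> point \<Rightarrow> real" where
  "Wstar g i j k l x = riemann g i j k l x
      - (1/3) * (g j k x * ricci g i l x - g j l x * ricci g i k x)"

definition cov2 :: "(idx \<Rightarrow> idx \<Rightarrow> point \<Rightarrow> real) \<Rightarrow> (idx \<Rightarrow> idx \<Rightarrow> point \<Rightarrow> real)
                    \<Rightarrow> idx \<Rightarrow> idx \<Rightarrow> idx \<Rightarrow> point \<Rightarrow> real" where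
  "cov2 g T m j k x = pd m (T j k) x
      - (\<Sum>p\<in>UNIV. christoffel g p m j x * T p k x + christoffel g p m k x * T j p x)"

definition cov4 :: "(idx \<Rightarrow> idx \<Rightarrow> point \<Rightarrow> real) \<Rightarrow> (idx \<Rightarrow> idx \<Rightarrow> idx \<Rightarrow> idx \<Rightarrow> point \<Rightarrow> real)
                    \<Rightarrow> idx \<Rightarrow> idx \<Rightarrow> idx \<Rightarrow> idx \<Rightarrow> idx \<Rightarrow> point \<Rightarrow> real" where
  "cov4 g W m i j k l x = pd m (W i j k l) x
      - (\<Sum>p\<in>UNIV. christoffel g p m i x * W p j k l x + christoffel g p m j x * W i p k l x
                 + christoffel g p m k x * W i j p l x + christoffel g p m l x * W i j k p x)"

end

theory Submission
  imports Defs
begin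


lemma fd_of_d: "(f::real\<Rightarrow>real) differentiable at x \<Longrightarrow> f field_differentiable at x"
  by (metis DERIV_deriv_iff_field_differentiable DERIV_deriv_iff_real_differentiable)

lemma line_fd:
  fixes f :: "point \<Rightarrow> real"
  assumes "f differentiable at x"
  shows "(\<lambda>t. f (x + t *\<^sub>R a)) field_differentiable at 0"
proof -
  have "(\<lambda>t::real. x + t *\<^sub>R a) differentiable at 0" by (intro derivative_intros)
  moreover have "f differentiable at ((\<lambda>t::real. x + t *\<^sub>R a) 0)" using assms by simp
  ultimately have "f \<circ> (\<lambda>t::real. x + t *\<^sub>R a) differentiable at 0"
    by (rule differentiable_chain_at)
  then show ?thesis by (intro fd_of_d) (simp add: o_def)
qed

lemma pd_add: "f differentiable at x \<Longrightarrow> h differentiable at x \<Longrightarrow>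
   pd m (\<lambda>y. f y + h y) x = pd m f x + pd m h x"
  unfolding pd_def by (intro deriv_add line_fd)

lemma pd_mult: "f differentiable at x \<Longrightarrow> h differentiable at x \<Longrightarrow>
   pd m (\<lambda>y. f y * h y) x = pd m f x * h x + f x * pd m h x"
  unfolding pd_def by (subst deriv_mult) (auto intro: line_fd)

lemma pd_const: "pd m (\<lambda>y. c) x = 0"
  unfolding pd_def by simp

lemma pd_inverse: "f differentiable at x \<Longrightarrow> f x \<noteq> 0 \<Longrightarrow>
   pd m (\<lambda>y. inverse (f y)) x = - pd m f x / (f x)^2"
  unfolding pd_def by (subst deriv_inverse) (auto intro: line_fd)

lemma pd_local:
  assumes "open U" "x \<in> U" "\<And>y. y \<in> U \<Longrightarrow> f y = h y"
  shows "pd m f x = pd m h x"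
  unfolding pd_def
proof (rule deriv_cong_ev)
  have "continuous (at 0) (\<lambda>t::real. x + t *\<^sub>R axis m 1)" by (intro continuous_intros)
  then have "eventually (\<lambda>t. x + t *\<^sub>R axis m 1 \<in> U) (nhds 0)"
    using assms(1,2) unfolding continuous_at by (auto simp: tendsto_def eventually_nhds_conv_at)
  then show "eventually (\<lambda>t. f (x + t *\<^sub>R axis m 1) = h (x + t *\<^sub>R axis m 1)) (nhds 0)"
    by eventually_elim (simp add: assms(3))
qed simp

lemma iter_pd_Nil[simp]: "iter_pd [] f = f" by (simp add: iter_pd_def)
lemma iter_pd_Cons: "iter_pd (m#ms) f = pd m (iter_pd ms f)" by (simp add: iter_pd_def)
lemma iter_pd_snoc: "iter_pd (ms@[m]) f = iter_pd ms (pd m f)" by (simp add: iter_pd_def)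

lemma iter_pd_local:
  assumes "open U" "\<And>y. y \<in> U \<Longrightarrow> f y = h y"
  shows "x \<in> U \<Longrightarrow> iter_pd ms f x = iter_pd ms h x"
proof (induction ms arbitrary: x)
  case Nil then show ?case using assms by simp
next
  case (Cons m ms) then show ?case unfolding iter_pd_Cons using assms(1) by (intro pd_local) auto
qed

lemma differentiable_local:
  assumes "f differentiable at x" "open U" "x \<in> U" "\<And>y. y \<in> U \<Longrightarrow> f y = h y"
  shows "h differentiable at x"
  using assms has_derivative_transform_within_open unfolding differentiable_def by metis

lemma smooth_iff: "smooth_on U f \<longleftrightarrow> (\<forall>x\<in>U. f differentiable at x) \<and> (\<forall>m. smooth_on U (pd m f))"
proof
  assume "smooth_on U f"
  then show "(\<forall>x\<in>U. f differentiable at x) \<and> (\<forall>m. smooth_on U (pd m f))"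
    unfolding smooth_on_def by (metis iter_pd_Nil iter_pd_snoc)
next
  assume a: "(\<forall>x\<in>U. f differentiable at x) \<and> (\<forall>m. smooth_on U (pd m f))"
  show "smooth_on U f" unfolding smooth_on_def
  proof (intro allI)
    fix ms show "\<forall>x\<in>U. iter_pd ms f differentiable at x"
    proof (cases ms rule: rev_cases)
      case Nil then show ?thesis using a by simp
    next
      case (snoc ys m) then show ?thesis using a unfolding smooth_on_def by (simp add: iter_pd_snoc)
    qed
  qed
qed

lemma smooth_const: "smooth_on U (\<lambda>y. c)"
proof -
  have "\<exists>c'. iter_pd ms (\<lambda>y. c) = (\<lambda>y. c')" for ms
    by (induction ms) (auto simp: iter_pd_Cons pd_const[abs_def])
  then show ?thesis unfolding smooth_on_def by (metis differentiable_const)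
qed

inductive sm :: "point set \<Rightarrow> (point \<Rightarrow> real) \<Rightarrow> bool" for U where
  base: "smooth_on U f \<Longrightarrow> sm U f"
| add: "sm U f \<Longrightarrow> sm U h \<Longrightarrow> sm U (\<lambda>y. f y + h y)"
| mult: "sm U f \<Longrightarrow> sm U h \<Longrightarrow> sm U (\<lambda>y. f y * h y)"
| inv: "sm U f \<Longrightarrow> (\<forall>y\<in>U. f y \<noteq> 0) \<Longrightarrow> sm U (\<lambda>y. inverse (f y))"

lemma sm_diff: "sm U f \<Longrightarrow> x \<in> U \<Longrightarrow> f differentiable at x"
proof (induction arbitrary: x rule: sm.induct)
  case (base f) then show ?case using smooth_iff by blast
next
  case (add f h) then show ?case by (auto intro: derivative_intros)
next
  case (mult f h) then show ?case by (auto intro: derivative_intros)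
next
  case (inv f) then show ?case by (auto intro!: derivative_intros)
qed

lemma sm_pd: "sm U f \<Longrightarrow> open U \<Longrightarrow> \<exists>h. sm U h \<and> (\<forall>x\<in>U. pd m f x = h x)"
proof (induction rule: sm.induct)
  case (base f) then show ?case using smooth_iff sm.base by blast
next
  case (add f h)
  then obtain a b where "sm U a" "sm U b" "\<forall>x\<in>U. pd m f x = a x" "\<forall>x\<in>U. pd m h x = b x" by auto
  then show ?case using add by (intro exI[of _ "\<lambda>y. a y + b y"]) (auto intro: sm.intros simp: pd_add sm_diff)
next
  case (mult f h)
  then obtain a b where "sm U a" "sm U b" "\<forall>x\<in>U. pd m f x = a x" "\<forall>x\<in>U. pd m h x = b x" by auto
  then show ?case using mult
    by (intro exI[of _ "\<lambda>y. a y * h y + f y * b y"]) (auto intro: sm.intros simp: pd_mult sm_diff)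
next
  case (inv f)
  then obtain a where a: "sm U a" "\<forall>x\<in>U. pd m f x = a x" by auto
  have c: "sm U (\<lambda>y. -1)" by (intro sm.base smooth_const)
  show ?case
  proof (intro exI[of _ "\<lambda>y. ((-1) * a y) * (inverse (f y) * inverse (f y))"] conjI ballI)
    show "sm U (\<lambda>y. -1 * a y * (inverse (f y) * inverse (f y)))"
      using sm.mult[OF sm.mult[OF c a(1)] sm.mult[OF sm.inv sm.inv], of f f] inv by simp
    fix x assume "x \<in> U" then show "pd m (\<lambda>y. inverse (f y)) x = -1 * a x * (inverse (f x) * inverse (f x))"
    proof -
      have "pd m (\<lambda>y. inverse (f y)) x = - pd m f x / (f x)^2"
        using inv \<open>x \<in> U\<close> by (intro pd_inverse) (auto intro: sm_diff)
      then show ?thesis using a \<open>x \<in> U\<close> by (simp add: power2_eq_square divide_inverse)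
    qed
  qed
qed

lemma sm_smooth:
  assumes "open U" shows "sm U f \<Longrightarrow> smooth_on U f"
proof -
  have "\<forall>f. sm U f \<longrightarrow> (\<forall>x\<in>U. iter_pd ms f differentiable at x)" for ms
  proof (induction ms rule: rev_induct)
    case Nil then show ?case by (simp add: sm_diff)
  next
    case (snoc m ms)
    show ?case
    proof (intro allI impI ballI)
      fix f x assume f: "sm U f" and x: "x \<in> U"
      obtain h where h: "sm U h" "\<forall>x\<in>U. pd m f x = h x" using sm_pd[OF f assms] by blast
      have d: "iter_pd ms h differentiable at x" using snoc.IH h(1) x by blast
      have e: "\<And>y. y \<in> U \<Longrightarrow> iter_pd ms h y = iter_pd ms (pd m f) y"
        using iter_pd_local[OF assms, of h "pd m f"] h(2) by metis
      show "iter_pd (ms @ [m]) f differentiable at x" unfolding iter_pd_snoc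
        by (rule differentiable_local[OF d assms x e])
    qed
  qed
  then show "sm U f \<Longrightarrow> smooth_on U f" unfolding smooth_on_def by blast
qed

lemma smooth_add: "open U \<Longrightarrow> smooth_on U f \<Longrightarrow> smooth_on U h \<Longrightarrow> smooth_on U (\<lambda>y. f y + h y)"
  by (rule sm_smooth, assumption, rule sm.add; rule sm.base)
lemma smooth_mult: "open U \<Longrightarrow> smooth_on U f \<Longrightarrow> smooth_on U h \<Longrightarrow> smooth_on U (\<lambda>y. f y * h y)"
  by (rule sm_smooth, assumption, rule sm.mult; rule sm.base)
lemma smooth_inverse: "open U \<Longrightarrow> smooth_on U f \<Longrightarrow> (\<forall>y\<in>U. f y \<noteq> 0) \<Longrightarrow> smooth_on U (\<lambda>y. inverse (f y))"
  by (rule sm_smooth, assumption, rule sm.inv, rule sm.base)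
lemma smooth_pd: "smooth_on U f \<Longrightarrow> smooth_on U (\<lambda>y. pd m f y)"
  using smooth_iff[of U f] by blast
lemma smooth_minus: "open U \<Longrightarrow> smooth_on U f \<Longrightarrow> smooth_on U (\<lambda>y. - f y)"
proof -
  assume a: "open U" "smooth_on U f"
  have "smooth_on U (\<lambda>y. (-1) * f y)" by (rule smooth_mult[OF a(1) smooth_const a(2)])
  then show ?thesis by simp
qed
lemma smooth_diff: "open U \<Longrightarrow> smooth_on U f \<Longrightarrow> smooth_on U h \<Longrightarrow> smooth_on U (\<lambda>y. f y - h y)"
proof -
  assume a: "open U" "smooth_on U f" "smooth_on U h"
  have "smooth_on U (\<lambda>y. f y + - h y)" by (rule smooth_add[OF a(1,2) smooth_minus[OF a(1,3)]])
  then show ?thesis by simp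
qed
lemma smooth_sum: "open U \<Longrightarrow> (\<And>i. i \<in> A \<Longrightarrow> smooth_on U (F i)) \<Longrightarrow> smooth_on U (\<lambda>y. \<Sum>i\<in>A. F i y)"
proof (induction A rule: infinite_finite_induct)
  case (infinite A) then show ?case using smooth_const by simp
next
  case empty then show ?case using smooth_const by simp
next
  case (insert a A)
  have "smooth_on U (\<lambda>y. F a y + (\<Sum>i\<in>A. F i y))" using insert by (intro smooth_add) auto
  then show ?case using insert by simp
qed
lemma smooth_prod: "open U \<Longrightarrow> (\<And>i. i \<in> A \<Longrightarrow> smooth_on U (F i)) \<Longrightarrow> smooth_on U (\<lambda>y. \<Prod>i\<in>A. F i y)"
proof (induction A rule: infinite_finite_induct)
  case (infinite A) then show ?case using smooth_const by simp
next
  case empty then show ?case using smooth_const by simp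
next
  case (insert a A)
  have "smooth_on U (\<lambda>y. F a y * (\<Prod>i\<in>A. F i y))" using insert by (intro smooth_mult) auto
  then show ?case using insert by simp
qed
lemma smooth_local: "open U \<Longrightarrow> smooth_on U f \<Longrightarrow> (\<And>y. y \<in> U \<Longrightarrow> f y = h y) \<Longrightarrow> smooth_on U h"
  unfolding smooth_on_def
proof (intro allI ballI)
  fix ms x assume a: "open U" "\<forall>ms. \<forall>x\<in>U. iter_pd ms f differentiable at x" "\<And>y. y \<in> U \<Longrightarrow> f y = h y" "x \<in> U"
  have e: "\<And>y. y \<in> U \<Longrightarrow> iter_pd ms f y = iter_pd ms h y" by (rule iter_pd_local[OF a(1,3)])
  show "iter_pd ms h differentiable at x"
    using a(2,4) by (intro differentiable_local[OF _ a(1,4) e]) auto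
qed



lemma alg_D2:
  fixes P B A Q :: "'n::finite \<Rightarrow> 'n \<Rightarrow> real"
  assumes D1: "\<And>i b. (\<Sum>a\<in>UNIV. P i a * A a b + B i a * Q a b) = 0"
    and R: "\<And>a l. (\<Sum>b\<in>UNIV. A a b * B b l) = (if a = l then 1 else 0)"
  shows "P i l = - (\<Sum>a\<in>UNIV. \<Sum>b\<in>UNIV. B i a * Q a b * B b l)"
proof -
  have "P i l = (\<Sum>a\<in>UNIV. P i a * (if a = l then 1 else 0))"
    by (simp add: if_distrib cong: if_cong)
  also have "\<dots> = (\<Sum>a\<in>UNIV. \<Sum>b\<in>UNIV. P i a * A a b * B b l)"
    by (simp add: R[symmetric] sum_distrib_left mult.assoc)
  also have "\<dots> = (\<Sum>b\<in>UNIV. (\<Sum>a\<in>UNIV. P i a * A a b) * B b l)"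
    by (subst sum.swap) (simp add: sum_distrib_right)
  also have "\<dots> = (\<Sum>b\<in>UNIV. (- (\<Sum>a\<in>UNIV. B i a * Q a b)) * B b l)"
  proof (rule sum.cong[OF refl])
    fix b
    have "(\<Sum>a\<in>UNIV. P i a * A a b) + (\<Sum>a\<in>UNIV. B i a * Q a b) = 0"
      using D1[of i b] by (simp add: sum.distrib)
    then have "(\<Sum>a\<in>UNIV. P i a * A a b) = - (\<Sum>a\<in>UNIV. B i a * Q a b)" by linarith
    then show "(\<Sum>a\<in>UNIV. P i a * A a b) * B b l = (- (\<Sum>a\<in>UNIV. B i a * Q a b)) * B b l" by simp
  qed
  also have "\<dots> = - (\<Sum>a\<in>UNIV. \<Sum>b\<in>UNIV. B i a * Q a b * B b l)"
    by (subst sum.swap) (simp add: sum_distrib_right sum_negf)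
  finally show ?thesis .
qed

lemma alg_D3:
  fixes m :: "'n::finite" and B :: "'n \<Rightarrow> 'n \<Rightarrow> real" and dg :: "'n \<Rightarrow> 'n \<Rightarrow> 'n \<Rightarrow> real"
    and \<Gamma> :: "'n \<Rightarrow> 'n \<Rightarrow> real"
  assumes Bs: "\<And>a b. B a b = B b a" and ds: "\<And>a b c. dg a b c = dg a c b"
    and \<Gamma>_def: "\<Gamma> = (\<lambda>i p. (1/2) * (\<Sum>q\<in>UNIV. B i q * (dg m q p + dg p q m - dg q m p)))"
  shows "(\<Sum>a\<in>UNIV. \<Sum>b\<in>UNIV. B i a * dg m a b * B b l) = (\<Sum>p\<in>UNIV. \<Gamma> i p * B p l + \<Gamma> l p * B i p)"
proof -
  define E where "E = (\<lambda>q p. dg m q p + dg p q m - dg q m p)"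
  have G: "\<Gamma> = (\<lambda>i p. (1/2) * (\<Sum>q\<in>UNIV. B i q * E q p))" unfolding \<Gamma>_def E_def ..
  have s1: "(\<Sum>p\<in>UNIV. \<Gamma> i p * B p l) = (\<Sum>p\<in>UNIV. \<Sum>q\<in>UNIV. (1/2) * (B i q * B p l * E q p))"
    unfolding G sum_distrib_left sum_distrib_right by (intro sum.cong refl) (simp only: mult_ac)
  have s2: "(\<Sum>p\<in>UNIV. \<Gamma> l p * B i p) = (\<Sum>q\<in>UNIV. \<Sum>p\<in>UNIV. (1/2) * (B l p * B i q * E p q))"
    unfolding G sum_distrib_left sum_distrib_right by (intro sum.cong refl) (simp only: mult_ac)
  have s2': "\<dots> = (\<Sum>p\<in>UNIV. \<Sum>q\<in>UNIV. (1/2) * (B l p * B i q * E p q))"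
    by (rule sum.swap)
  have pt: "(1/2) * (B i q * B p l * E q p) + (1/2) * (B l p * B i q * E p q) = B i q * dg m q p * B p l" for p q
  proof -
    have "B l p = B p l" by (rule Bs)
    moreover have "dg m p q = dg m q p" "dg q p m = dg q m p" "dg p m q = dg p q m" by (rule ds)+
    ultimately show ?thesis unfolding E_def by (simp add: algebra_simps)
  qed
  have "(\<Sum>p\<in>UNIV. \<Gamma> i p * B p l + \<Gamma> l p * B i p) = (\<Sum>p\<in>UNIV. \<Sum>q\<in>UNIV. B i q * dg m q p * B p l)"
    unfolding sum.distrib s1 s2 s2' sum.distrib[symmetric] pt ..
  also have "\<dots> = (\<Sum>a\<in>UNIV. \<Sum>b\<in>UNIV. B i a * dg m a b * B b l)"
    by (rule sum.swap)
  finally show ?thesis by simp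
qed

lemma alg_key:
  fixes G B PB :: "'n::finite \<Rightarrow> 'n \<Rightarrow> real" and W PW :: "'n \<Rightarrow> 'n \<Rightarrow> 'n \<Rightarrow> 'n \<Rightarrow> real"
  assumes dB: "\<And>i l. PB i l = - (\<Sum>p\<in>UNIV. G i p * B p l + G l p * B i p)"
    and dW: "\<And>i j k l. PW i j k l = (\<Sum>p\<in>UNIV. G p i * W p j k l + G p j * W i p k l + G p k * W i j p l + G p l * W i j k p)"
  shows "(\<Sum>i\<in>UNIV. \<Sum>l\<in>UNIV. PB i l * W i j k l + B i l * PW i j k l)
     - (\<Sum>p\<in>UNIV. G p j * (\<Sum>i\<in>UNIV. \<Sum>l\<in>UNIV. B i l * W i p k l) + G p k * (\<Sum>i\<in>UNIV. \<Sum>l\<in>UNIV. B i l * W i j p l)) = 0"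
proof -
  define T1 where "T1 = (\<Sum>i\<in>UNIV. \<Sum>l\<in>UNIV. \<Sum>p\<in>UNIV. G i p * B p l * W i j k l)"
  define T2 where "T2 = (\<Sum>i\<in>UNIV. \<Sum>l\<in>UNIV. \<Sum>p\<in>UNIV. G l p * B i p * W i j k l)"
  define T3 where "T3 = (\<Sum>i\<in>UNIV. \<Sum>l\<in>UNIV. \<Sum>p\<in>UNIV. B i l * G p i * W p j k l)"
  define T4 where "T4 = (\<Sum>i\<in>UNIV. \<Sum>l\<in>UNIV. \<Sum>p\<in>UNIV. B i l * G p j * W i p k l)"
  define T5 where "T5 = (\<Sum>i\<in>UNIV. \<Sum>l\<in>UNIV. \<Sum>p\<in>UNIV. B i l * G p k * W i j p l)"
  define T6 where "T6 = (\<Sum>i\<in>UNIV. \<Sum>l\<in>UNIV. \<Sum>p\<in>UNIV. B i l * G p l * W i j k p)"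
  have pw: "PB i l * W i j k l + B i l * PW i j k l = (\<Sum>p\<in>UNIV. B i l * G p i * W p j k l + B i l * G p j * W i p k l
       + B i l * G p k * W i j p l + B i l * G p l * W i j k p - G i p * B p l * W i j k l - G l p * B i p * W i j k l)" for i l
  proof -
    have "PB i l * W i j k l + B i l * PW i j k l = (\<Sum>p\<in>UNIV. - ((G i p * B p l + G l p * B i p) * W i j k l))
       + (\<Sum>p\<in>UNIV. B i l * (G p i * W p j k l + G p j * W i p k l + G p k * W i j p l + G p l * W i j k p))"
      by (simp only: dB dW sum_distrib_left sum_distrib_right sum_negf mult_minus_left)
    also have "\<dots> = (\<Sum>p\<in>UNIV. - ((G i p * B p l + G l p * B i p) * W i j k l)
       + B i l * (G p i * W p j k l + G p j * W i p k l + G p k * W i j p l + G p l * W i j k p))"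
      by (simp only: sum.distrib)
    also have "\<dots> = (\<Sum>p\<in>UNIV. B i l * G p i * W p j k l + B i l * G p j * W i p k l
       + B i l * G p k * W i j p l + B i l * G p l * W i j k p - G i p * B p l * W i j k l - G l p * B i p * W i j k l)"
      by (intro sum.cong refl) (simp add: algebra_simps)
    finally show ?thesis .
  qed
  have L: "(\<Sum>i\<in>UNIV. \<Sum>l\<in>UNIV. PB i l * W i j k l + B i l * PW i j k l) = T3 + T4 + T5 + T6 - T1 - T2"
    unfolding pw T1_def T2_def T3_def T4_def T5_def T6_def
    by (simp only: sum_subtractf sum.distrib)
  have R: "(\<Sum>p\<in>UNIV. G p j * (\<Sum>i\<in>UNIV. \<Sum>l\<in>UNIV. B i l * W i p k l) + G p k * (\<Sum>i\<in>UNIV. \<Sum>l\<in>UNIV. B i l * W i j p l)) = T4 + T5"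
  proof -
    have "T4 = (\<Sum>p\<in>UNIV. \<Sum>i\<in>UNIV. \<Sum>l\<in>UNIV. B i l * G p j * W i p k l)"
      unfolding T4_def by (subst sum.swap, subst (2) sum.swap, simp)
    moreover have "T5 = (\<Sum>p\<in>UNIV. \<Sum>i\<in>UNIV. \<Sum>l\<in>UNIV. B i l * G p k * W i j p l)"
      unfolding T5_def by (subst sum.swap, subst (2) sum.swap, simp)
    ultimately show ?thesis by (simp add: sum.distrib sum_distrib_left algebra_simps)
  qed
  have 13: "T3 = T1"
  proof -
    have "T3 = (\<Sum>p\<in>UNIV. \<Sum>l\<in>UNIV. \<Sum>i\<in>UNIV. B p l * G i p * W i j k l)"
      unfolding T3_def by simp
    also have "\<dots> = T1" unfolding T1_def
      by (subst sum.swap, subst (2) sum.swap, subst sum.swap) (simp add: mult_ac)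
    finally show ?thesis .
  qed
  have 26: "T6 = T2"
  proof -
    have "T6 = (\<Sum>i\<in>UNIV. \<Sum>p\<in>UNIV. \<Sum>l\<in>UNIV. B i p * G l p * W i j k l)"
      unfolding T6_def by simp
    also have "\<dots> = T2" unfolding T2_def
      by (subst (2) sum.swap) (simp add: mult_ac)
    finally show ?thesis .
  qed
  show ?thesis unfolding L R using 13 26 by linarith
qed



lemma delta_sum: "(\<Sum>i\<in>UNIV. (if i = j then 1 else 0) * f i) = (f (j::'n::finite)::real)"
proof -
  have "(\<Sum>i\<in>UNIV. (if i = j then 1 else 0) * f i) = (\<Sum>i\<in>UNIV. if i = j then f i else 0)"
    by (intro sum.cong refl) simp
  then show ?thesis by simp
qed

lemma pd_sum: "finite A \<Longrightarrow> (\<And>i. i \<in> A \<Longrightarrow> F i differentiable at x) \<Longrightarrow>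
   pd m (\<lambda>y. \<Sum>i\<in>A. F i y) x = (\<Sum>i\<in>A. pd m (F i) x)"
proof (induction A rule: finite_induct)
  case empty then show ?case by (simp add: pd_const)
next
  case (insert a A)
  have "pd m (\<lambda>y. F a y + (\<Sum>i\<in>A. F i y)) x = pd m (F a) x + pd m (\<lambda>y. \<Sum>i\<in>A. F i y) x"
    using insert by (intro pd_add) (auto intro!: differentiable_sum)
  then show ?case using insert by simp
qed

lemma pd_cmult: "f differentiable at x \<Longrightarrow> pd m (\<lambda>y. c * f y) x = c * pd m f x"
  using pd_mult[of "\<lambda>y. c" x f m] by (simp add: pd_const)

lemma smooth_da: "smooth_on U f \<Longrightarrow> x \<in> U \<Longrightarrow> f differentiable at x"
  using smooth_iff by blast

lemma smooth_det: "open U \<Longrightarrow> (\<And>a b. smooth_on U (F a b)) \<Longrightarrow> smooth_on U (\<lambda>y. det (\<chi> a b. F a b y))"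
  unfolding det_def
  by (intro smooth_sum smooth_mult smooth_prod smooth_const) auto

locale st =
  fixes U :: "point set" and g :: "idx \<Rightarrow> idx \<Rightarrow> point \<Rightarrow> real"
  assumes lor: "lorentzian_on U g"
begin

lemma U_open: "open U" using lor unfolding lorentzian_on_def by blast
lemma g_smooth: "smooth_on U (g i j)" using lor unfolding lorentzian_on_def by blast
lemma g_sym: "x \<in> U \<Longrightarrow> g i j x = g j i x" using lor unfolding lorentzian_on_def by blast

lemma det_mink: "det minkowski \<noteq> 0"
proof -
  have "det minkowski = (\<Prod>i\<in>UNIV. minkowski $ i $ i)"
    by (rule det_diagonal) (simp add: minkowski_def)
  moreover have "(\<Prod>i\<in>UNIV. minkowski $ i $ i) \<noteq> 0"
    by (subst prod_zero_iff) (auto simp: minkowski_def)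
  ultimately show ?thesis by simp
qed

lemma detG: "x \<in> U \<Longrightarrow> det (metric_matrix g x) \<noteq> 0"
proof -
  assume x: "x \<in> U"
  then obtain P :: "real^4^4" where "transpose P ** metric_matrix g x ** P = minkowski"
    using lor unfolding lorentzian_on_def by blast
  then have "det (transpose P) * det (metric_matrix g x) * det P = det minkowski"
    by (metis det_mul)
  then show ?thesis using det_mink by auto
qed

lemma G_inv: "x \<in> U \<Longrightarrow> metric_matrix g x ** matrix_inv (metric_matrix g x) = mat 1 \<and>
   matrix_inv (metric_matrix g x) ** metric_matrix g x = mat 1"
proof -
  assume "x \<in> U"
  then have "invertible (metric_matrix g x)" using detG invertible_det_nz by blast
  then show ?thesis unfolding invertible_def matrix_inv_def by (rule someI_ex)
qed

lemma ginv_left: "x \<in> U \<Longrightarrow> (\<Sum>l\<in>UNIV. ginv g i l x * g l j x) = (if i = j then 1 else 0)"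
  using G_inv[of x] unfolding vec_eq_iff matrix_matrix_mult_def ginv_def
  by (auto simp: metric_matrix_def mat_def)

lemma ginv_right: "x \<in> U \<Longrightarrow> (\<Sum>l\<in>UNIV. g i l x * ginv g l j x) = (if i = j then 1 else 0)"
  using G_inv[of x] unfolding vec_eq_iff matrix_matrix_mult_def ginv_def
  by (auto simp: metric_matrix_def mat_def)

lemma ginv_sym: "x \<in> U \<Longrightarrow> ginv g i j x = ginv g j i x"
proof -
  assume x: "x \<in> U"
  let ?G = "metric_matrix g x" and ?B = "matrix_inv (metric_matrix g x)"
  have Gt: "transpose ?G = ?G" using g_sym[OF x] by (simp add: vec_eq_iff transpose_def metric_matrix_def)
  have "transpose ?B = transpose ?B ** (?G ** ?B)" using G_inv[OF x] by simp
  also have "\<dots> = (transpose ?B ** transpose ?G) ** ?B" by (simp add: Gt matrix_mul_assoc)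
  also have "\<dots> = ?B" using G_inv[OF x] by (simp add: matrix_transpose_mul[symmetric] transpose_mat)
  finally have "transpose ?B $ i $ j = ?B $ i $ j" by simp
  then show ?thesis unfolding ginv_def transpose_def by simp
qed

lemma ginv_cramer: "x \<in> U \<Longrightarrow> ginv g i j x =
   det (\<chi> a b. if b = i then (if a = j then 1 else 0) else g a b x) * inverse (det (metric_matrix g x))"
proof -
  assume x: "x \<in> U"
  let ?G = "metric_matrix g x" and ?B = "matrix_inv (metric_matrix g x)"
  let ?v = "(\<chi> k. ?B $ k $ j)" and ?b = "(\<chi> a. if a = j then 1 else (0::real))"
  have "?G *v ?v = ?b"
    using G_inv[OF x] unfolding vec_eq_iff matrix_matrix_mult_def matrix_vector_mult_def
    by (auto simp: mat_def)
  then have "?v = (\<chi> k. det(\<chi> a c. if c = k then ?b$a else ?G$a$c) / det ?G)"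
    using cramer[OF detG[OF x]] by blast
  then have "?v $ i = det(\<chi> a c. if c = i then ?b$a else ?G$a$c) / det ?G" by simp
  moreover have "(\<chi> a c. if c = i then ?b$a else ?G$a$c) = (\<chi> a b. if b = i then (if a = j then 1 else 0) else g a b x)"
    by (simp add: vec_eq_iff metric_matrix_def)
  ultimately show ?thesis by (simp add: ginv_def divide_inverse)
qed

lemma ginv_smooth: "smooth_on U (ginv g i j)"
proof (rule smooth_local[OF U_open])
  show "smooth_on U (\<lambda>y. det (\<chi> a b. if b = i then (if a = j then 1 else 0) else g a b y) * inverse (det (metric_matrix g y)))"
  proof (intro smooth_mult U_open smooth_inverse)
    show "smooth_on U (\<lambda>y. det (\<chi> a b. if b = i then (if a = j then 1 else 0) else g a b y))"
    proof (rule smooth_det[OF U_open])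
      fix a b show "smooth_on U (\<lambda>y. if b = i then (if a = j then 1 else 0) else g a b y)"
        by (cases "b = i") (simp_all add: smooth_const g_smooth)
    qed
    show "smooth_on U (\<lambda>y. det (metric_matrix g y))"
      unfolding metric_matrix_def by (rule smooth_det[OF U_open g_smooth])
    show "\<forall>y\<in>U. det (metric_matrix g y) \<noteq> 0" using detG by blast
  qed
  show "\<And>y. y \<in> U \<Longrightarrow> det (\<chi> a b. if b = i then (if a = j then 1 else 0) else g a b y) * inverse (det (metric_matrix g y)) = ginv g i j y"
    by (rule ginv_cramer[symmetric])
qed


lemmas sm_intros = smooth_mult smooth_add smooth_diff smooth_sum smooth_pd smooth_const ginv_smooth g_smooth U_open

lemma chr_smooth: "smooth_on U (christoffel g k i j)"
proof -
  have eq: "christoffel g k i j = (\<lambda>x. (1/2) * (\<Sum>l\<in>UNIV. ginv g k l x *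
      (pd i (g l j) x + pd j (g l i) x - pd l (g i j) x)))" by (rule ext) (simp add: christoffel_def)
  show ?thesis unfolding eq by (intro sm_intros)
qed

lemma riem_smooth: "smooth_on U (riemann g i j k l)"
proof -
  have eq: "riemann g i j k l = (\<lambda>x. \<Sum>m\<in>UNIV. g l m x *
      (pd i (christoffel g m j k) x - pd j (christoffel g m i k) x
       + (\<Sum>p\<in>UNIV. christoffel g m i p x * christoffel g p j k x
                   - christoffel g m j p x * christoffel g p i k x)))" by (rule ext) (simp add: riemann_def)
  show ?thesis unfolding eq by (intro sm_intros chr_smooth)
qed

lemma ric_smooth: "smooth_on U (ricci g j k)"
proof -
  have eq: "ricci g j k = (\<lambda>x. \<Sum>i\<in>UNIV. \<Sum>l\<in>UNIV. ginv g i l x * riemann g i j k l x)"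
    by (rule ext) (simp add: ricci_def)
  show ?thesis unfolding eq by (intro sm_intros riem_smooth)
qed

lemma W_smooth: "smooth_on U (Wstar g i j k l)"
proof -
  have eq: "Wstar g i j k l = (\<lambda>x. riemann g i j k l x
      - (1/3) * (g j k x * ricci g i l x - g j l x * ricci g i k x))"
    by (rule ext) (simp add: Wstar_def)
  show ?thesis unfolding eq by (intro sm_intros riem_smooth ric_smooth)
qed

lemma D1: "x \<in> U \<Longrightarrow> (\<Sum>a\<in>UNIV. pd m (ginv g i a) x * g a b x + ginv g i a x * pd m (g a b) x) = 0"
proof -
  assume x: "x \<in> U"
  have "pd m (\<lambda>y. \<Sum>a\<in>UNIV. ginv g i a y * g a b y) x = pd m (\<lambda>y. if i = b then 1 else 0) x"
    by (rule pd_local[OF U_open x]) (simp add: ginv_left)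
  also have "\<dots> = 0" by (rule pd_const)
  finally have "pd m (\<lambda>y. \<Sum>a\<in>UNIV. ginv g i a y * g a b y) x = 0" .
  moreover have "pd m (\<lambda>y. \<Sum>a\<in>UNIV. ginv g i a y * g a b y) x = (\<Sum>a\<in>UNIV. pd m (\<lambda>y. ginv g i a y * g a b y) x)"
    by (rule pd_sum) (auto intro!: smooth_da[OF _ x] smooth_mult U_open ginv_smooth g_smooth)
  moreover have "pd m (\<lambda>y. ginv g i a y * g a b y) x = pd m (ginv g i a) x * g a b x + ginv g i a x * pd m (g a b) x" for a
    by (rule pd_mult) (auto intro!: smooth_da[OF _ x] ginv_smooth g_smooth)
  ultimately show ?thesis by simp
qed

lemma dginv: "x \<in> U \<Longrightarrow> pd m (ginv g i l) x =
   - (\<Sum>p\<in>UNIV. christoffel g i m p x * ginv g p l x + christoffel g l m p x * ginv g i p x)"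
proof -
  assume x: "x \<in> U"
  have "pd m (ginv g i l) x = - (\<Sum>a\<in>UNIV. \<Sum>b\<in>UNIV. ginv g i a x * pd m (g a b) x * ginv g b l x)"
    by (rule alg_D2[where A = "\<lambda>a b. g a b x"]) (simp_all add: D1[OF x] ginv_right[OF x])
  also have "(\<Sum>a\<in>UNIV. \<Sum>b\<in>UNIV. ginv g i a x * pd m (g a b) x * ginv g b l x)
     = (\<Sum>p\<in>UNIV. christoffel g i m p x * ginv g p l x + christoffel g l m p x * ginv g i p x)"
  proof -
    have ds: "pd a (g b c) x = pd a (g c b) x" for a b c
      by (rule pd_local[OF U_open x]) (rule g_sym)
    have "(\<Sum>a\<in>UNIV. \<Sum>b\<in>UNIV. ginv g i a x * pd m (g a b) x * ginv g b l x)
       = (\<Sum>p\<in>UNIV. (\<lambda>i p. (1/2) * (\<Sum>q\<in>UNIV. ginv g i q x * (pd m (g q p) x + pd p (g q m) x - pd q (g m p) x))) i p * ginv g p l x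
          + (\<lambda>i p. (1/2) * (\<Sum>q\<in>UNIV. ginv g i q x * (pd m (g q p) x + pd p (g q m) x - pd q (g m p) x))) l p * ginv g i p x)"
      by (rule alg_D3[where B = "\<lambda>a b. ginv g a b x" and dg = "\<lambda>a b c. pd a (g b c) x"])
         (auto simp: ginv_sym[OF x] ds)
    then show ?thesis by (simp add: christoffel_def)
  qed
  finally show ?thesis .
qed

lemma main:
  assumes W0: "\<And>m i j k l x. x \<in> U \<Longrightarrow> cov4 g (Wstar g) m i j k l x = 0"
    and kap: "\<kappa> \<noteq> 0"
    and RT: "\<And>i j x. x \<in> U \<Longrightarrow> ricci g i j x = \<kappa> * T i j x"
    and tr: "\<And>x. x \<in> U \<Longrightarrow> (\<Sum>i\<in>UNIV. \<Sum>j\<in>UNIV. ginv g i j x * T i j x) = 0"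
    and x: "x \<in> U"
  shows "cov2 g T m j k x = 0"
proof -
  define C where "C = (\<lambda>j k y. \<Sum>i\<in>UNIV. \<Sum>l\<in>UNIV. ginv g i l y * Wstar g i j k l y)"
  have scal0: "scalar_curv g y = 0" if y: "y \<in> U" for y
  proof -
    have "scalar_curv g y = \<kappa> * (\<Sum>i\<in>UNIV. \<Sum>j\<in>UNIV. ginv g i j y * T i j y)"
      unfolding scalar_curv_def by (simp add: RT[OF y] sum_distrib_left mult_ac)
    then show ?thesis using tr[OF y] by simp
  qed
  have E1: "C j k y = 4/3 * ricci g j k y" if y: "y \<in> U" for j k y
  proof -
    have "C j k y = (\<Sum>i\<in>UNIV. \<Sum>l\<in>UNIV. ginv g i l y * riemann g i j k l y
         - (1/3) * g j k y * (ginv g i l y * ricci g i l y) + (1/3) * (ginv g i l y * g l j y) * ricci g i k y)"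
      unfolding C_def Wstar_def using g_sym[OF y] by (intro sum.cong refl) (simp add: algebra_simps)
    also have "\<dots> = ricci g j k y - (1/3) * g j k y * scalar_curv g y
         + (1/3) * (\<Sum>i\<in>UNIV. (\<Sum>l\<in>UNIV. ginv g i l y * g l j y) * ricci g i k y)"
      unfolding ricci_def[of g j k y] scalar_curv_def
      by (simp add: sum.distrib sum_subtractf sum_distrib_left sum_distrib_right mult_ac)
    also have "\<dots> = ricci g j k y + (1/3) * ricci g j k y"
      using scal0[OF y] by (simp add: ginv_left[OF y] delta_sum)
    finally show ?thesis by simp
  qed
  define c where "c = 3 / (4 * \<kappa>)"
  have E2: "T j k y = c * C j k y" if y: "y \<in> U" for j k y
    using E1[OF y] RT[OF y, of j k] kap unfolding c_def by (simp add: field_simps)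
  have C_smooth: "smooth_on U (C j k)" for j k
  proof -
    have eq: "C j k = (\<lambda>y. \<Sum>i\<in>UNIV. \<Sum>l\<in>UNIV. ginv g i l y * Wstar g i j k l y)" unfolding C_def ..
    show ?thesis unfolding eq by (intro sm_intros W_smooth)
  qed
  have pdT: "pd m (T j k) x = c * pd m (C j k) x"
  proof -
    have "pd m (T j k) x = pd m (\<lambda>y. c * C j k y) x"
      by (rule pd_local[OF U_open x]) (rule E2)
    also have "\<dots> = c * pd m (C j k) x"
      by (rule pd_cmult) (rule smooth_da[OF C_smooth x])
    finally show ?thesis .
  qed
  have pdC: "pd m (C j k) x = (\<Sum>i\<in>UNIV. \<Sum>l\<in>UNIV. pd m (ginv g i l) x * Wstar g i j k l x
       + ginv g i l x * pd m (Wstar g i j k l) x)"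
  proof -
    have d: "(\<lambda>y. ginv g i l y * Wstar g i j k l y) differentiable at x" for i l
      by (intro smooth_da[OF _ x] sm_intros W_smooth)
    have "pd m (C j k) x = (\<Sum>i\<in>UNIV. pd m (\<lambda>y. \<Sum>l\<in>UNIV. ginv g i l y * Wstar g i j k l y) x)"
      unfolding C_def by (rule pd_sum) (auto intro!: differentiable_sum d)
    also have "\<dots> = (\<Sum>i\<in>UNIV. \<Sum>l\<in>UNIV. pd m (\<lambda>y. ginv g i l y * Wstar g i j k l y) x)"
      by (intro sum.cong refl pd_sum) (auto intro: d)
    also have "\<dots> = (\<Sum>i\<in>UNIV. \<Sum>l\<in>UNIV. pd m (ginv g i l) x * Wstar g i j k l x
       + ginv g i l x * pd m (Wstar g i j k l) x)"
      by (intro sum.cong refl pd_mult smooth_da[OF _ x] ginv_smooth W_smooth)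
    finally show ?thesis .
  qed
  have dW: "pd m (Wstar g i j k l) x = (\<Sum>p\<in>UNIV. christoffel g p m i x * Wstar g p j k l x
      + christoffel g p m j x * Wstar g i p k l x + christoffel g p m k x * Wstar g i j p l x
      + christoffel g p m l x * Wstar g i j k p x)" for i j k l
    using W0[OF x, of m i j k l] unfolding cov4_def by simp
  have covC: "cov2 g C m j k x = 0"
  proof -
    have "(\<Sum>i\<in>UNIV. \<Sum>l\<in>UNIV. pd m (ginv g i l) x * Wstar g i j k l x + ginv g i l x * pd m (Wstar g i j k l) x)
     - (\<Sum>p\<in>UNIV. christoffel g p m j x * (\<Sum>i\<in>UNIV. \<Sum>l\<in>UNIV. ginv g i l x * Wstar g i p k l x)
        + christoffel g p m k x * (\<Sum>i\<in>UNIV. \<Sum>l\<in>UNIV. ginv g i l x * Wstar g i j p l x)) = 0"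
      by (rule alg_key[where G = "\<lambda>a b. christoffel g a m b x"]) (simp_all add: dginv[OF x] dW)
    then show ?thesis unfolding cov2_def pdC by (simp add: C_def)
  qed
  have "cov2 g T m j k x = c * cov2 g C m j k x"
    unfolding cov2_def pdT using E2[OF x]
    by (simp add: algebra_simps sum_distrib_left)
  then show ?thesis using covC by simp
qed
end

theorem mainTheorem10:
  fixes U :: "(real^4) set" and g T :: "4 \<Rightarrow> 4 \<Rightarrow> real^4 \<Rightarrow> real" and \<kappa> :: real
  assumes "lorentzian_on U g"
    and "\<And>m i j k l x. x \<in> U \<Longrightarrow> cov4 g (Wstar g) m i j k l x = 0"
    and "\<kappa> \<noteq> 0"
    and "\<And>i j x. x \<in> U \<Longrightarrow> ricci g i j x = \<kappa> * T i j x"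
    and "\<And>i j x. x \<in> U \<Longrightarrow> T i j x = T j i x"
    and "\<And>x. x \<in> U \<Longrightarrow> (\<Sum>i\<in>UNIV. \<Sum>j\<in>UNIV. ginv g i j x * T i j x) = 0"
  shows "\<And>m j k x. x \<in> U \<Longrightarrow> cov2 g T m j k x = 0"
  using st.main[OF st.intro[OF assms(1)] assms(2) assms(3) assms(4) assms(6)] by blast

end
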